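(* Let $A$ be a nonempty finite set of positive integers, let $n$ be a positive integer, let $B$ be a nonempty subset of $A$, and let $\alpha$ be a positive integer with $\alpha\le|B|$. Then: (a) If $\binom{|A|}{\alpha}=\sum_{d=1}^{\sup A}\mu(d)\binom{v(A,d)}{\alpha}$, then $\binom{|B|}{\alpha}=\sum_{d=1}^{\sup B}\mu(d)\binom{v(B,d)}{\alpha}$. (b) If $\binom{|A|}{\alpha}=\sum_{d\mid n}\mu(d)\binom{v(A,d)}{\alpha}$, then $\binom{|B|}{\alpha}=\sum_{d\mid n}\mu(d)\binom{v(B,d)}{\alpha}$. (c) If $\sum_{d=1}^{\sup A}\mu(d)\binom{v(A,d)}{\alpha}=0$, then $\sum_{d=1}^{\sup B}\mu(d)\binom{v(B,d)}{\alpha}=0$. (d) If $\sum_{d\mid n}\mu(d)\binom{v(A,d)}{\alpha}=0$, then $\sum_{d\mid n}\mu(d)\binom{v(B,d)}{\alpha}=0$.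
   Context: For a finite nonempty set $X$ of positive integers, $\sup X$ is its largest element. $\mu$ is the Möbius function. For a positive integer $d$, $v(X,d)$ is the number of multiples of $d$ in $X$. Binomial coefficients $\binom{m}{k}$ are $0$ when $k>m$. *)

theory Defs
  imports "HOL-Computational_Algebra.Computational_Algebra"
begin

definition mobius :: "nat \<Rightarrow> int" where
  "mobius d = (if squarefree d then (-1) ^ card (prime_factors d) else 0)"

definition v :: "nat set \<Rightarrow> nat \<Rightarrow> nat" where
  "v X d = card {x \<in> X. d dvd x}"

end

theory Submission imports Defs begin

lemma pf_prod_primes:
  assumes "finite T" "\<forall>p\<in>T. prime (p::nat)"
  shows "prime_factors (\<Prod>T) = T"
proof -
  have "prime_factors (prod id T) = \<Union>((prime_factors \<circ> id) ` T)"
    using assms by (intro prime_factors_prod) auto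
  also have "\<dots> = T" using assms by (auto simp: prime_prime_factors)
  finally show ?thesis by simp
qed

lemma sqf_prod: "squarefree (d::nat) \<Longrightarrow> \<Prod>(prime_factors d) = d"
proof -
  assume s: "squarefree d"
  hence d0: "d \<noteq> 0" by (cases "d = 0") auto
  have "(\<Prod>p \<in> prime_factors d. p ^ multiplicity p d) = normalize d"
    using d0 by (rule prod_prime_factors)
  moreover have "(\<Prod>p \<in> prime_factors d. p ^ multiplicity p d) = \<Prod>(prime_factors d)"
    using s d0 by (intro prod.cong) (auto simp: squarefree_factorial_semiring')
  ultimately show ?thesis by simp
qed

lemma bij_sqf:
  assumes "m > (0::nat)"
  shows "bij_betw (\<lambda>T. \<Prod>T) (Pow (prime_factors m)) {d. d dvd m \<and> squarefree d}"
proof (rule bij_betwI')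
  fix X Y assume "X \<in> Pow (prime_factors m)" "Y \<in> Pow (prime_factors m)"
  then have "finite X" "finite Y" "\<forall>p\<in>X. prime p" "\<forall>p\<in>Y. prime p"
    by (auto intro: finite_subset)
  then show "(\<Prod>X = \<Prod>Y) = (X = Y)"
    by (metis pf_prod_primes)
next
  fix X assume X: "X \<in> Pow (prime_factors m)"
  have fin: "finite X" using X finite_subset by fastforce
  have pr: "\<forall>p\<in>X. prime p" using X by auto
  have "\<Prod>X dvd \<Prod>(prime_factors m)" using X by (intro prod_dvd_prod_subset) auto
  also have "\<Prod>(prime_factors m) dvd (\<Prod>p \<in> prime_factors m. p ^ multiplicity p m)"
    by (intro prod_dvd_prod) (simp add: dvd_power prime_factors_multiplicity)
  also have "\<dots> = m" using assms by (simp add: prod_prime_factors)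
  finally have "\<Prod>X dvd m" .
  moreover have "squarefree (\<Prod>X)"
    using pr by (intro squarefree_prod_coprime) (auto simp: primes_coprime squarefree_prime)
  ultimately show "\<Prod>X \<in> {d. d dvd m \<and> squarefree d}" by simp
next
  fix d assume d: "d \<in> {d. d dvd m \<and> squarefree d}"
  show "\<exists>X\<in>Pow (prime_factors m). d = \<Prod>X"
  proof (intro bexI[of _ "prime_factors d"])
    show "d = \<Prod>(prime_factors d)" using d sqf_prod by auto
    show "prime_factors d \<in> Pow (prime_factors m)" using d assms
      by (intro PowI dvd_prime_factors) auto
  qed
qed

lemma mob_sum:
  assumes "m > (0::nat)"
  shows "(\<Sum>d\<in>{d. d dvd m}. mobius d) = (if m = 1 then 1 else 0)"
proof -
  have fin: "finite {d. d dvd m}" using assms by simp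
  have "(\<Sum>d\<in>{d. d dvd m}. mobius d) = (\<Sum>d\<in>{d. d dvd m \<and> squarefree d}. mobius d)"
    using fin by (intro sum.mono_neutral_right) (auto simp: mobius_def)
  also have "\<dots> = (\<Sum>T\<in>Pow (prime_factors m). mobius (\<Prod>T))"
    using bij_sqf[OF assms] by (rule sum.reindex_bij_betw[symmetric])
  also have "\<dots> = (\<Sum>T\<in>Pow (prime_factors m). (-1) ^ card T * (\<Prod>x\<in>T. 1) * (\<Prod>x\<in>prime_factors m - T. 1))"
  proof (intro sum.cong refl)
    fix T assume T: "T \<in> Pow (prime_factors m)"
    have "\<Prod>T \<in> {d. d dvd m \<and> squarefree d}" using bij_betw_apply[OF bij_sqf[OF assms] T] .
    moreover have "prime_factors (\<Prod>T) = T"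
      using T by (intro pf_prod_primes) (auto intro: finite_subset)
    ultimately show "mobius (\<Prod>T) = (-1) ^ card T * (\<Prod>x\<in>T. 1) * (\<Prod>x\<in>prime_factors m - T. 1)"
      by (simp add: mobius_def)
  qed
  also have "\<dots> = (\<Prod>x\<in>prime_factors m. 1 - 1)"
    by (rule prod_diff_conv_sum[symmetric]) simp
  also have "\<dots> = (if m = 1 then 1 else 0)"
  proof (cases "m = 1")
    case False
    then obtain p where p: "prime p" "p dvd m" using prime_factor_nat by blast
    then have "p \<in> prime_factors m" using assms by (intro prime_factorsI) auto
    then have "prime_factors m \<noteq> {}" by blast
    then show ?thesis using False by (simp add: card_gt_0_iff)
  qed simp
  finally show ?thesis .
qed

lemma sum_ind: "finite F \<Longrightarrow> (\<Sum>S\<in>F. (if P S then 1 else 0 :: int)) = int (card {S\<in>F. P S})"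
  by (simp add: sum.If_cases Int_def conj_commute)

lemma count_sum:
  fixes X D :: "nat set"
  assumes "finite X" "finite D"
  shows "(\<Sum>d\<in>D. mobius d * int (v X d choose k)) =
    (\<Sum>S\<in>{S. S \<subseteq> X \<and> card S = k}. \<Sum>d\<in>{d\<in>D. d dvd Gcd S}. mobius d)"
proof -
  let ?F = "{S. S \<subseteq> X \<and> card S = k}"
  have finF: "finite ?F" using assms by simp
  have "v X d choose k = card {S\<in>?F. d dvd Gcd S}" for d
  proof -
    have "v X d choose k = card {S. S \<subseteq> {x\<in>X. d dvd x} \<and> card S = k}"
      unfolding v_def using assms by (simp add: n_subsets)
    also have "{S. S \<subseteq> {x\<in>X. d dvd x} \<and> card S = k} = {S\<in>?F. d dvd Gcd S}"
      by (auto simp: dvd_Gcd_iff)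
    finally show ?thesis .
  qed
  hence "(\<Sum>d\<in>D. mobius d * int (v X d choose k)) =
      (\<Sum>d\<in>D. \<Sum>S\<in>?F. if d dvd Gcd S then mobius d else 0)"
  proof (intro sum.cong refl)
    fix d assume h: "\<And>d. v X d choose k = card {S\<in>?F. d dvd Gcd S}"
    have "mobius d * int (v X d choose k) = mobius d * (\<Sum>S\<in>?F. if d dvd Gcd S then 1 else 0)"
      unfolding h using sum_ind[OF finF, of "\<lambda>S. d dvd Gcd S"] by simp
    also have "\<dots> = (\<Sum>S\<in>?F. if d dvd Gcd S then mobius d else 0)"
      by (auto simp: sum_distrib_left intro!: sum.cong)
    finally show "mobius d * int (v X d choose k) = (\<Sum>S\<in>?F. if d dvd Gcd S then mobius d else 0)" .
  qed
  also have "\<dots> = (\<Sum>S\<in>?F. \<Sum>d\<in>D. if d dvd Gcd S then mobius d else 0)"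
    by (rule sum.swap)
  also have "\<dots> = (\<Sum>S\<in>?F. \<Sum>d\<in>{d\<in>D. d dvd Gcd S}. mobius d)"
    using assms by (simp add: sum.inter_filter)
  finally show ?thesis .
qed


lemma count_max:
  fixes X :: "nat set"
  assumes "finite X" "X \<noteq> {}" "\<forall>x\<in>X. x > 0" "k > 0"
  shows "(\<Sum>d=1..Max X. mobius d * int (v X d choose k)) =
    int (card {S. (S \<subseteq> X \<and> card S = k) \<and> Gcd S = 1})"
proof -
  have "(\<Sum>d=1..Max X. mobius d * int (v X d choose k)) =
    (\<Sum>S\<in>{S. S \<subseteq> X \<and> card S = k}. \<Sum>d\<in>{d\<in>{1..Max X}. d dvd Gcd S}. mobius d)"
    using assms by (intro count_sum) auto
  also have "\<dots> = (\<Sum>S\<in>{S. S \<subseteq> X \<and> card S = k}. if Gcd S = 1 then 1 else 0)"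
  proof (intro sum.cong refl)
    fix S assume S: "S \<in> {S. S \<subseteq> X \<and> card S = k}"
    then have "S \<noteq> {}" "S \<subseteq> X" using assms by auto
    then obtain x where x: "x \<in> S" "x \<in> X" by auto
    have "Gcd S dvd x" using x by simp
    moreover have "x > 0" using x assms by auto
    ultimately have g: "Gcd S > 0" "Gcd S \<le> x" by (auto intro: dvd_imp_le Nat.gr0I)
    have "x \<le> Max X" using x assms by auto
    then have "{d\<in>{1..Max X}. d dvd Gcd S} = {d. d dvd Gcd S}"
      using g by (auto intro: dvd_imp_le Nat.gr0I order.trans[OF dvd_imp_le[OF _ g(1)]])
    then show "(\<Sum>d\<in>{d\<in>{1..Max X}. d dvd Gcd S}. mobius d) = (if Gcd S = 1 then 1 else 0)"
      using mob_sum[OF g(1)] by simp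
  qed
  also have "\<dots> = int (card {S. (S \<subseteq> X \<and> card S = k) \<and> Gcd S = 1})"
    using sum_ind[of "{S. S \<subseteq> X \<and> card S = k}"] assms by simp
  finally show ?thesis .
qed

lemma count_n:
  fixes X :: "nat set"
  assumes "finite X" "n > 0"
  shows "(\<Sum>d\<in>{d. d dvd n}. mobius d * int (v X d choose k)) =
    int (card {S. (S \<subseteq> X \<and> card S = k) \<and> gcd (Gcd S) n = 1})"
proof -
  have "(\<Sum>d\<in>{d. d dvd n}. mobius d * int (v X d choose k)) =
    (\<Sum>S\<in>{S. S \<subseteq> X \<and> card S = k}. \<Sum>d\<in>{d\<in>{d. d dvd n}. d dvd Gcd S}. mobius d)"
    using assms by (intro count_sum) auto
  also have "\<dots> = (\<Sum>S\<in>{S. S \<subseteq> X \<and> card S = k}. if gcd (Gcd S) n = 1 then 1 else 0)"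
  proof (intro sum.cong refl)
    fix S
    have g: "gcd (Gcd S) n > 0" using assms by simp
    have "{d\<in>{d. d dvd n}. d dvd Gcd S} = {d. d dvd gcd (Gcd S) n}" by auto
    then show "(\<Sum>d\<in>{d\<in>{d. d dvd n}. d dvd Gcd S}. mobius d) = (if gcd (Gcd S) n = 1 then 1 else 0)"
      using mob_sum[OF g] by simp
  qed
  also have "\<dots> = int (card {S. (S \<subseteq> X \<and> card S = k) \<and> gcd (Gcd S) n = 1})"
    using sum_ind[of "{S. S \<subseteq> X \<and> card S = k}"] assms by simp
  finally show ?thesis .
qed

lemma mono_all:
  assumes "finite A" "B \<subseteq> A"
    and "card {S. S \<subseteq> A \<and> card S = k} = card {S. (S \<subseteq> A \<and> card S = k) \<and> Q S}"
  shows "card {S. S \<subseteq> B \<and> card S = k} = card {S. (S \<subseteq> B \<and> card S = k) \<and> Q S}"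
proof -
  have "{S. (S \<subseteq> A \<and> card S = k) \<and> Q S} = {S. S \<subseteq> A \<and> card S = k}"
    using assms by (intro card_subset_eq) auto
  then have "\<forall>S. S \<subseteq> A \<and> card S = k \<longrightarrow> Q S" by blast
  then have "{S. (S \<subseteq> B \<and> card S = k) \<and> Q S} = {S. S \<subseteq> B \<and> card S = k}"
    using assms by blast
  then show ?thesis by simp
qed

lemma mono_none:
  assumes "finite A" "B \<subseteq> A"
    and "card {S. (S \<subseteq> A \<and> card S = k) \<and> Q S} = 0"
  shows "card {S. (S \<subseteq> B \<and> card S = k) \<and> Q S} = 0"
proof -
  have "{S. (S \<subseteq> A \<and> card S = k) \<and> Q S} = {}" using assms by simp
  then have e: "{S. (S \<subseteq> B \<and> card S = k) \<and> Q S} = {}" using assms by blast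
  show ?thesis by (subst e) (rule card.empty)
qed

theorem corollary5p4:
  fixes A B :: "nat set" and n \<alpha> :: nat
  assumes "finite A" "A \<noteq> {}" "\<forall>x\<in>A. x > 0" "n > 0"
    and "B \<subseteq> A" "B \<noteq> {}" "\<alpha> > 0" "\<alpha> \<le> card B"
  shows
   "(int (card A choose \<alpha>) = (\<Sum>d=1..Max A. mobius d * int (v A d choose \<alpha>))
      \<longrightarrow> int (card B choose \<alpha>) = (\<Sum>d=1..Max B. mobius d * int (v B d choose \<alpha>)))
  \<and> (int (card A choose \<alpha>) = (\<Sum>d\<in>{d. d dvd n}. mobius d * int (v A d choose \<alpha>))
      \<longrightarrow> int (card B choose \<alpha>) = (\<Sum>d\<in>{d. d dvd n}. mobius d * int (v B d choose \<alpha>)))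
  \<and> ((\<Sum>d=1..Max A. mobius d * int (v A d choose \<alpha>)) = 0
      \<longrightarrow> (\<Sum>d=1..Max B. mobius d * int (v B d choose \<alpha>)) = 0)
  \<and> ((\<Sum>d\<in>{d. d dvd n}. mobius d * int (v A d choose \<alpha>)) = 0
      \<longrightarrow> (\<Sum>d\<in>{d. d dvd n}. mobius d * int (v B d choose \<alpha>)) = 0)"
proof -
  have fB: "finite B" using assms finite_subset by blast
  have pB: "\<forall>x\<in>B. x > 0" using assms by blast
  note mA = count_max[OF assms(1,2,3,7)] and mB = count_max[OF fB assms(6) pB assms(7)]
  note nA = count_n[OF assms(1,4), of \<alpha>] and nB = count_n[OF fB assms(4), of \<alpha>]
  have cA: "card A choose \<alpha> = card {S. S \<subseteq> A \<and> card S = \<alpha>}" using assms by (simp add: n_subsets)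
  have cB: "card B choose \<alpha> = card {S. S \<subseteq> B \<and> card S = \<alpha>}" using fB by (simp add: n_subsets)
  show ?thesis
  proof (intro conjI impI)
    assume "int (card A choose \<alpha>) = (\<Sum>d=1..Max A. mobius d * int (v A d choose \<alpha>))"
    then have "card {S. S \<subseteq> A \<and> card S = \<alpha>} = card {S. (S \<subseteq> A \<and> card S = \<alpha>) \<and> Gcd S = 1}"
      unfolding mA cA by linarith
    from mono_all[OF assms(1,5) this]
    show "int (card B choose \<alpha>) = (\<Sum>d=1..Max B. mobius d * int (v B d choose \<alpha>))"
      unfolding mB cB by simp
  next
    assume "int (card A choose \<alpha>) = (\<Sum>d\<in>{d. d dvd n}. mobius d * int (v A d choose \<alpha>))"
    then have "card {S. S \<subseteq> A \<and> card S = \<alpha>} = card {S. (S \<subseteq> A \<and> card S = \<alpha>) \<and> gcd (Gcd S) n = 1}"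
      unfolding nA cA by linarith
    from mono_all[OF assms(1,5) this]
    show "int (card B choose \<alpha>) = (\<Sum>d\<in>{d. d dvd n}. mobius d * int (v B d choose \<alpha>))"
      unfolding nB cB by simp
  next
    assume "(\<Sum>d=1..Max A. mobius d * int (v A d choose \<alpha>)) = 0"
    then have "card {S. (S \<subseteq> A \<and> card S = \<alpha>) \<and> Gcd S = 1} = 0"
      unfolding mA by linarith
    from mono_none[OF assms(1,5) this]
    show "(\<Sum>d=1..Max B. mobius d * int (v B d choose \<alpha>)) = 0"
      unfolding mB by simp
  next
    assume "(\<Sum>d\<in>{d. d dvd n}. mobius d * int (v A d choose \<alpha>)) = 0"
    then have "card {S. (S \<subseteq> A \<and> card S = \<alpha>) \<and> gcd (Gcd S) n = 1} = 0"
      unfolding nA by linarith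
    from mono_none[OF assms(1,5) this]
    show "(\<Sum>d\<in>{d. d dvd n}. mobius d * int (v B d choose \<alpha>)) = 0"
      unfolding nB by simp
  qed
qed
end
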